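(* For every integer $k\ge2$, in the setting of the context, $\lim_{p\to\infty}\gamma_p(k)=\frac{12}{k}$.
   Context: For integers $k\ge2$, $n\ge1$ and $x\in\mathbb R$: $P_{n,k}(x)=\left(1+\frac{x^{n-1}}{2}\right)^{k+1}-\left(1-\frac{x^{n-1}}{2}\right)^{k+1}$, and for $n>k$: $Q_{n,k}(x)=(k+1)x^{n-k}$. Fix an integer $k\ge2$ and, for each integer $n>k$, an arbitrary $\xi(k;n)\in(0,1)$ with $P_{n,k}(\xi(k;n))=Q_{n,k}(\xi(k;n))$. Let $\alpha=\limsup_{n\to\infty}\xi(k;n)^{n-1}$ and let $(n_p)_{p\in\mathbb N}$ be a strictly increasing sequence of integers $>k$ with $\xi(k;n_p)^{n_p-1}\to\alpha$. For $n>k$ put $$C_n(k)=\frac{\xi(k;n)^{3n-k-2}}{\frac{1}{k+2}\left[\left(1+\frac{\xi(k;n)^{n-1}}{2}\right)^{k+2}-\left(1-\frac{\xi(k;n)^{n-1}}{2}\right)^{k+2}\right]-\xi(k;n)^{n-k}},$$ and $\gamma_p(k)=C_{n_p}(k)$ for $p\in\mathbb N$. *)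

theory Defs
  imports "HOL-Analysis.Analysis"
begin

definition P_poly :: "nat \<Rightarrow> nat \<Rightarrow> real \<Rightarrow> real" where
  "P_poly n k x = (1 + x ^ (n - 1) / 2) ^ (k + 1) - (1 - x ^ (n - 1) / 2) ^ (k + 1)"

definition Q_poly :: "nat \<Rightarrow> nat \<Rightarrow> real \<Rightarrow> real" where
  "Q_poly n k x = real (k + 1) * x ^ (n - k)"

text \<open>C n k evaluated at the chosen root x = xi(k;n).\<close>
definition C_const :: "nat \<Rightarrow> nat \<Rightarrow> real \<Rightarrow> real" where
  "C_const n k x = x ^ (3 * n - k - 2) /
     ((1 / real (k + 2)) * ((1 + x ^ (n - 1) / 2) ^ (k + 2) - (1 - x ^ (n - 1) / 2) ^ (k + 2))
      - x ^ (n - k))"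

end

theory Submission
  imports Defs
begin
lemma ch3: "real (Suc m choose 3) * 6 = real (Suc m) * real m * (real m - 1)"
proof -
  have a: "3 * (Suc m choose 3) = Suc m * (m choose 2)" using Suc_times_binomial[of 2 m] by (simp add: numeral_eq_Suc)
  have b: "2 * (Suc m' choose 2) = Suc m' * (m' choose 1)" for m' using Suc_times_binomial[of 1 m'] by (simp add: numeral_eq_Suc)
  show ?thesis
  proof (cases m)
    case 0 then show ?thesis by simp
  next
    case (Suc m') 
    have "real (Suc m choose 3) * 6 = 2 * real (3 * (Suc m choose 3))" by simp
    also have "\<dots> = real (Suc m) * real (2 * (m choose 2))" unfolding a by (simp add: algebra_simps)
    also have "\<dots> = real (Suc m) * real m * (real m - 1)" unfolding Suc b by (simp add: algebra_simps)
    finally show ?thesis .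
  qed
qed

lemma binexp: "(1 + u)^m - (1 - u)^m = (\<Sum>i\<le>m. real (m choose i) * (1 - (-1)^i) * (u::real)^i)"
proof -
  have "(1 + u)^m = (\<Sum>i\<le>m. real (m choose i) * u^i)" using binomial_ring[of u 1 m] by (simp add: add.commute)
  moreover have "(1 - u)^m = (\<Sum>i\<le>m. real (m choose i) * (-1)^i * u^i)" using binomial_ring[of "-u" 1 m]
    by (simp add: power_minus' add.commute mult.assoc)
  ultimately show ?thesis by (simp add: sum_subtractf[symmetric] algebra_simps)
qed

lemma lim_poly:
  fixes a :: "nat \<Rightarrow> real"
  assumes "\<And>i. i < j \<Longrightarrow> a i = 0" "j \<le> N"
  shows "((\<lambda>y. (\<Sum>i\<le>N. a i * y^i) / y^j) \<longlongrightarrow> a j) (at 0)"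
proof -
  have split: "{..N} = {..<j} \<union> {j..N}" using assms(2) by auto
  have eq: "(\<Sum>i\<le>N. a i * y^i) / y^j = (\<Sum>i\<in>{j..N}. a i * y^(i-j))" if "y \<noteq> 0" for y
  proof -
    have "(\<Sum>i\<le>N. a i * y^i) = (\<Sum>i\<in>{j..N}. a i * y^i)"
      unfolding split by (subst sum.union_disjoint) (auto simp: assms(1))
    also have "\<dots> / y^j = (\<Sum>i\<in>{j..N}. a i * y^i / y^j)" by (simp add: sum_divide_distrib)
    also have "\<dots> = (\<Sum>i\<in>{j..N}. a i * y^(i-j))"
      by (rule sum.cong) (auto simp: power_diff that)
    finally show ?thesis .
  qed
  have c: "((\<lambda>y. (\<Sum>i\<in>{j..N}. a i * y^(i-j))) \<longlongrightarrow> (\<Sum>i\<in>{j..N}. a i * 0^(i-j))) (at 0)"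
    by (intro tendsto_intros)
  have v: "(\<Sum>i\<in>{j..N}. a i * (0::real)^(i-j)) = a j"
  proof -
    have "(\<Sum>i\<in>{j..N}. a i * (0::real)^(i-j)) = (\<Sum>i\<in>{j}. a i * (0::real)^(i-j))"
      by (rule sum.mono_neutral_right) (use assms(2) in auto)
    then show ?thesis by simp
  qed
  show ?thesis
    apply (rule Lim_transform_eventually[OF c[unfolded v]])
    unfolding eventually_at_filter by (simp add: eq)
qed
definition Pf :: "nat \<Rightarrow> real \<Rightarrow> real" where
  "Pf k y = (1 + y/2)^(k+1) - (1 - y/2)^(k+1)"
definition Ef :: "nat \<Rightarrow> real \<Rightarrow> real" where
  "Ef k y = (1 / real (k+2)) * ((1 + y/2)^(k+2) - (1 - y/2)^(k+2)) - Pf k y / real (k+1)"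

lemma Pf_sum: "Pf k y = (\<Sum>i\<le>k+1. (real (k+1 choose i) * (1 - (-1)^i) / 2^i) * y^i)"
  unfolding Pf_def binexp by (rule sum.cong) (auto simp: power_divide)

lemma Pf_lim: "((\<lambda>y. Pf k y / y) \<longlongrightarrow> real k + 1) (at 0)"
proof -
  have "((\<lambda>y. Pf k y / y^1) \<longlongrightarrow> (real (k+1 choose 1) * (1 - (-1)^1) / 2^1)) (at 0)"
    unfolding Pf_sum by (rule lim_poly) auto
  moreover have e: "real (k+1 choose 1) * (1 - (-1)^1) / 2^1 = real k + (1::real)" by simp
  ultimately show ?thesis by (simp only: e power_one_right)
qed

lemma aux: "(a * u / v) * w / d1 - (b * u / v) * w / d2 = (a/d1 - b/d2) * u / v * (w::real)"
  unfolding divide_inverse by (simp add: algebra_simps)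

lemma Ef_sum: "Ef k y = (\<Sum>i\<le>k+2. ((real (k+2 choose i) / real (k+2) - real (k+1 choose i) / real (k+1))
     * (1 - (-1)^i) / 2^i) * y^i)"
proof -
  have "Pf k y = (\<Sum>i\<le>k+2. (real (k+1 choose i) * (1 - (-1)^i) / 2^i) * y^i)"
    unfolding Pf_sum using sum.atMost_Suc[of "\<lambda>i. (real (k+1 choose i) * (1 - (-1)^i) / 2^i) * y^i" "k+1"]
    by (simp add: binomial_eq_0)
  moreover have "(1 + y/2)^(k+2) - (1 - y/2)^(k+2) = (\<Sum>i\<le>k+2. (real (k+2 choose i) * (1 - (-1)^i) / 2^i) * y^i)"
    unfolding binexp by (rule sum.cong) (auto simp: power_divide)
  ultimately have "Ef k y = (\<Sum>i\<le>k+2. (real (k+2 choose i) * (1 - (-1)^i) / 2^i) * y^i) / real (k+2)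
      - (\<Sum>i\<le>k+2. (real (k+1 choose i) * (1 - (-1)^i) / 2^i) * y^i) / real (k+1)"
    unfolding Ef_def by simp
  also have "\<dots> = (\<Sum>i\<le>k+2. (real (k+2 choose i) * (1 - (-1)^i) / 2^i) * y^i / real (k+2)
      - (real (k+1 choose i) * (1 - (-1)^i) / 2^i) * y^i / real (k+1))"
    by (simp only: sum_divide_distrib sum_subtractf)
  also have "\<dots> = (\<Sum>i\<le>k+2. ((real (k+2 choose i) / real (k+2) - real (k+1 choose i) / real (k+1))
     * (1 - (-1)^i) / 2^i) * y^i)"
    by (rule sum.cong) (simp_all only: aux)
  finally show ?thesis .
qed

lemma Ef_lim: assumes "k \<ge> 1" shows "((\<lambda>y. Ef k y / y^3) \<longlongrightarrow> real k / 12) (at 0)"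
proof -
  let ?c = "\<lambda>i. ((real (k+2 choose i) / real (k+2) - real (k+1 choose i) / real (k+1))
     * (1 - (-1)^i) / 2^i)"
  have "((\<lambda>y. Ef k y / y^3) \<longlongrightarrow> ?c 3) (at 0)"
    unfolding Ef_sum
  proof (rule lim_poly)
    fix i :: nat assume "i < 3"
    then have "i = 0 \<or> i = 1 \<or> i = 2" by auto
    then show "?c i = 0" by (auto simp: field_simps)
  qed (use assms in simp)
  moreover have E: "?c 3 = real k / 12"
  proof -
    have a: "real (Suc (k+1) choose 3) * 6 = real (k+2) * real (k+1) * real k"
      using ch3[of "k+1"] by simp
    have b: "real (Suc k choose 3) * 6 = real (k+1) * real k * (real k - 1)"
      using ch3[of "k"] by simp
    have a': "real (k+2 choose 3) = real (k+2) * real (k+1) * real k / 6" using a by simp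
    have b': "real (k+1 choose 3) = real (k+1) * real k * (real k - 1) / 6" using b by simp
    have a'': "real (k+2 choose 3) / real (k+2) = real (k+1) * real k / 6" unfolding a' by (simp add: field_simps)
    have b'': "real (k+1 choose 3) / real (k+1) = real k * (real k - 1) / 6" unfolding b' by (simp add: field_simps)
    show ?thesis unfolding a'' b'' by (simp add: field_simps)
  qed
  ultimately show ?thesis by (simp only: E)
qed

lemma Pf_lower: assumes "y > 0" "k \<ge> 2" shows "real (k+1) * y + y^3/4 \<le> Pf k y"
proof -
  let ?t = "\<lambda>i. (real (k+1 choose i) * (1 - (-1)^i) / 2^i) * y^i"
  have nn: "?t i \<ge> 0" for i
  proof -
    have "(1::real) - (-1)^i \<ge> 0" by (cases "even i") auto
    then show ?thesis using assms by auto
  qed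
  have "(\<Sum>i\<in>{1,3}. ?t i) \<le> (\<Sum>i\<le>k+1. ?t i)"
    by (rule sum_mono2) (use assms nn in auto)
  moreover have "(\<Sum>i\<in>{1,3}. ?t i) = ?t 1 + ?t 3" by simp
  moreover have "real (k+1 choose 3) \<ge> 1" using assms(2) by (simp add: Suc_le_eq)
  then have "?t 3 \<ge> y^3/4" using assms by (auto simp: field_simps)
  moreover have "?t 1 = real (k+1) * y" by simp
  ultimately show ?thesis unfolding Pf_sum by linarith
qed

definition gf :: "nat \<Rightarrow> real \<Rightarrow> real" where
  "gf k y = (Pf k y / y) / (real (k+1) * (Ef k y / y^3))"

lemma gf_lim: assumes "k \<ge> 1" shows "(gf k \<longlongrightarrow> 12 / real k) (at 0)"
proof -
  have "(gf k \<longlongrightarrow> (real k + 1) / (real (k+1) * (real k / 12))) (at 0)"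
    unfolding gf_def[abs_def]
    by (intro tendsto_divide Pf_lim tendsto_mult tendsto_const Ef_lim assms) (use assms in auto)
  moreover have "real k > 0" using assms by simp
  then have "(real k + 1) / (real (k+1) * (real k / 12)) = 12 / real k"
    using nonzero_divide_mult_cancel_left[of "real k + 1" "real k / 12"] by (simp add: add.commute)
  ultimately show ?thesis by simp
qed

lemma C_eq:
  assumes "n > k" "k \<ge> 2" "0 < x" "P_poly n k x = Q_poly n k x"
  shows "C_const n k x = gf k (x^(n-1))"
proof -
  define y where "y = x^(n-1)"
  define z where "z = x^(n-k)"
  have y0: "y \<noteq> 0" using assms unfolding y_def by simp
  have Pz: "Pf k y = real (k+1) * z" using assms(4) unfolding P_poly_def Q_poly_def Pf_def y_def z_def by simp
  have e1: "x^(3*n-k-2) = y^2 * z"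
  proof -
    have "3*n-k-2 = (n-1)*2 + (n-k)" using assms by simp
    then show ?thesis unfolding y_def z_def by (simp add: power_add power_mult)
  qed
  have E: "Ef k y = (1 / real (k + 2)) * ((1 + y / 2) ^ (k + 2) - (1 - y / 2) ^ (k + 2)) - z"
    unfolding Ef_def Pz by simp
  have "C_const n k x = x^(3*n-k-2) / ((1/real(k+2)) * ((1 + y/2)^(k+2) - (1 - y/2)^(k+2)) - z)"
    unfolding C_const_def y_def z_def by (rule refl)
  also have "\<dots> = y^2 * z / Ef k y" unfolding e1 E by (rule refl)
  also have "\<dots> = gf k y"
  proof -
    have c: "real (k+1) \<noteq> 0" by simp
    have "gf k y = (real(k+1) * (z/y)) / (real(k+1) * (Ef k y / y^3))" unfolding gf_def Pz by simp
    also have "\<dots> = (z/y) / (Ef k y / y^3)" by (rule mult_divide_mult_cancel_left[OF c])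
    also have "\<dots> = y^2 * z / Ef k y" using y0
      by (cases "Ef k y = 0") (simp_all add: field_simps power3_eq_cube power2_eq_square)
    finally show ?thesis by simp
  qed
  finally show ?thesis unfolding y_def .
qed

lemma y_lim:
  fixes k :: nat and xi :: "nat \<Rightarrow> real"
  assumes hk: "k \<ge> 2"
    and hxi: "\<And>n. n > k \<Longrightarrow> 0 < xi n \<and> xi n < 1 \<and> P_poly n k (xi n) = Q_poly n k (xi n)"
  shows "(\<lambda>n. xi n ^ (n - 1)) \<longlonglongrightarrow> 0"
proof (rule order_tendstoI)
  fix a :: real assume "a < 0"
  show "\<forall>\<^sub>F n in sequentially. a < xi n ^ (n - 1)"
    using eventually_gt_at_top[of k] by eventually_elim (use hxi \<open>a < 0\<close> in \<open>smt (verit) zero_less_power\<close>)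
next
  fix a :: real assume a0: "0 < a"
  define e where "e = min a (1/2)"
  have e0: "0 < e" "e \<le> 1/2" "e \<le> a" using a0 unfolding e_def by auto
  define d where "d = e^3 / (4 * real (k+1))"
  have d0: "0 < d" "d < 1" 
  proof -
    show "0 < d" using e0 unfolding d_def by simp
    have "e^3 \<le> 1" using e0 by (intro power_le_one) auto
    then show "d < 1" unfolding d_def by (simp add: field_simps)
  qed
  have "(\<lambda>n. (1 - d)^n) \<longlonglongrightarrow> 0" by (rule LIMSEQ_power_zero) (use d0 in simp)
  moreover have "0 < e^(k-1)" using e0 by simp
  ultimately have "\<forall>\<^sub>F n in sequentially. (1 - d)^n < e^(k-1)"
    by (rule order_tendstoD)
  then obtain N where N: "\<And>n. n \<ge> N \<Longrightarrow> (1 - d)^n < e^(k-1)" by (auto simp: eventually_sequentially)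
  have "\<forall>\<^sub>F n in sequentially. n > k \<and> n - 1 \<ge> N"
    using eventually_gt_at_top[of k] eventually_ge_at_top[of "N+1"] by eventually_elim auto
  then show "\<forall>\<^sub>F n in sequentially. xi n ^ (n - 1) < a"
  proof eventually_elim
    case (elim n)
    define x where "x = xi n"
    define y where "y = x^(n-1)"
    define z where "z = x^(n-k)"
    define t where "t = x^(k-1)"
    have x: "0 < x" "x < 1" "P_poly n k x = Q_poly n k x" using hxi elim unfolding x_def by auto
    have y0: "0 < y" "0 < t" "0 < z" using x unfolding y_def t_def z_def by auto
    have yzt: "y = z * t" unfolding y_def z_def t_def using elim hk by (simp add: power_add[symmetric])
    have yt: "y \<le> t" unfolding y_def t_def using x elim by (intro power_decreasing) auto
    have Pz: "Pf k y = real (k+1) * z" using x(3) unfolding P_poly_def Q_poly_def Pf_def y_def z_def by simp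
    have low: "real (k+1) * y + y^3/4 \<le> real (k+1) * z" using Pf_lower[OF y0(1) hk] Pz by simp
    show ?case
    proof (rule ccontr)
      assume "\<not> xi n ^ (n - 1) < a"
      then have ya: "y \<ge> e" using e0 unfolding y_def x_def by simp
      have "(real (k+1) * y + y^3/4) * t \<le> real (k+1) * z * t" using low y0 by (simp add: mult_right_mono)
      then have "y^3 * t / 4 \<le> real (k+1) * y * (1 - t)" using yzt by (simp add: algebra_simps)
      then have "y * (y^2 * t / 4) \<le> y * (real (k+1) * (1 - t))" by (simp add: power2_eq_square power3_eq_cube algebra_simps)
      then have "y^2 * t / 4 \<le> real (k+1) * (1 - t)" using mult_le_cancel_left_pos[OF y0(1)] by blast
      moreover have "e^3 \<le> y^2 * t"
      proof -
        have "e^2 \<le> y^2" using ya e0 by (simp add: power_mono)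
        moreover have "e \<le> t" using ya yt by simp
        ultimately have "e^2 * e \<le> y^2 * t" using e0 by (intro mult_mono) auto
        then show ?thesis by (simp add: power3_eq_cube power2_eq_square)
      qed
      ultimately have "e^3 / 4 \<le> real (k+1) * (1 - t)" by simp
      then have t1: "t \<le> 1 - d" unfolding d_def by (simp add: field_simps)
      have "e^(k-1) \<le> y^(k-1)" using ya e0 by (simp add: power_mono)
      also have "y^(k-1) = t^(n-1)" unfolding y_def t_def by (simp add: power_mult[symmetric] mult.commute)
      also have "\<dots> \<le> (1 - d)^(n-1)" using t1 y0 by (simp add: power_mono)
      finally show False using N[of "n-1"] elim by simp
    qed
  qed
qed

theorem lemma5p6:
  fixes k :: nat and xi :: "nat \<Rightarrow> real" and np :: "nat \<Rightarrow> nat"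
  assumes hk: "k \<ge> 2"
    and hxi: "\<And>n. n > k \<Longrightarrow> 0 < xi n \<and> xi n < 1 \<and> P_poly n k (xi n) = Q_poly n k (xi n)"
    and hmono: "strict_mono np"
    and hnp: "\<And>p. np p > k"
    and hlim: "(\<lambda>p. ereal (xi (np p) ^ (np p - 1))) \<longlonglongrightarrow>
                 limsup (\<lambda>n. ereal (xi n ^ (n - 1)))"
  shows "(\<lambda>p. C_const (np p) k (xi (np p))) \<longlonglongrightarrow> 12 / real k"
proof -
  have Y: "(\<lambda>p. xi (np p) ^ (np p - 1)) \<longlonglongrightarrow> 0"
    using LIMSEQ_subseq_LIMSEQ[OF y_lim[OF hk hxi] hmono] by (simp add: o_def)
  have F: "filterlim (\<lambda>p. xi (np p) ^ (np p - 1)) (at 0) sequentially"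
  proof -
    have nz: "\<And>p. xi (np p) ^ (np p - 1) \<noteq> 0" using hxi[OF hnp] by (simp add: less_imp_neq[symmetric])
    show ?thesis unfolding filterlim_at using Y nz by simp
  qed
  have G: "((\<lambda>p. gf k (xi (np p) ^ (np p - 1))) \<longlongrightarrow> 12 / real k) sequentially"
  proof -
    have k1: "k \<ge> 1" using hk by simp
    show ?thesis using filterlim_compose[OF gf_lim[OF k1] F] .
  qed
  show ?thesis
    using G by (subst C_eq[OF hnp hk]) (use hxi[OF hnp] in auto)
qed
end
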